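(* Let $\ddot q\in L^{1,2}_a(\Omega_\delta\times\Omega_\delta)$ with $\ddot q\not\equiv0$. Then the problem $\min_{\kappa_0\in\mathbb{A}^0_\delta}\hat I(\ddot\kappa_0;\ddot q)$, where $\ddot\kappa_0$ is defined by $2\ddot\kappa_0^{-1}(x,x')=\kappa_0^{-1}(x)+\kappa_0^{-1}(x')$, admits an optimal solution given pointwise by $\hat\kappa_0(x)=\hat c_\delta\big[\int_{\Omega_\delta}|\ddot q(x,x')|^2dx'\big]^{1/2}$, where $\hat c_\delta=|\Omega_\delta|\,\|\ddot q\|^{-1}_{L^{1,2}(\Omega_\delta\times\Omega_\delta)}$.
   Context: $\Omega_\delta\subset\mathbb{R}^n$ is a bounded open set. $L^{1,2}(\Omega_\delta\times\Omega_\delta)$ is the mixed-norm space with norm $\|\ddot q\|_{L^{1,2}}=\int_{\Omega_\delta}(\int_{\Omega_\delta}|\ddot q(x,x')|^2dx')^{1/2}dx$; $L^{1,2}_a$ is its subspace of antisymmetric functions ($\ddot q(x,x')=-\ddot q(x',x)$ a.e.). $\mathbb{A}^0_\delta=\{\kappa_0\in L^1(\Omega_\delta):\kappa_0\ge0\text{ a.e.},\ \int_{\Omega_\delta}\kappa_0\le|\Omega_\delta|\}$. $\hat I(\ddot\kappa;\ddot q)=\frac12\int_{\Omega_\delta}\int_{\Omega_\delta}\ddot\kappa^{-1}(x,x')\ddot q(x,x')^2\,dx\,dx'$, with $\kappa_0^{-1}=+\infty$ where $\kappa_0=0$ and the convention $(+\infty)\cdot0=0$. *)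

theory Defs
  imports "HOL-Analysis.Analysis"
begin

abbreviation dom_meas :: "'a::euclidean_space set \<Rightarrow> 'a measure" where
  "dom_meas \<Omega> \<equiv> lebesgue_on \<Omega>"

abbreviation dom2_meas :: "'a::euclidean_space set \<Rightarrow> ('a \<times> 'a) measure" where
  "dom2_meas \<Omega> \<equiv> lebesgue_on \<Omega> \<Otimes>\<^sub>M lebesgue_on \<Omega>"

definition row_norm :: "'a::euclidean_space set \<Rightarrow> ('a \<times> 'a \<Rightarrow> real) \<Rightarrow> 'a \<Rightarrow> real" where
  "row_norm \<Omega> q x = sqrt (\<integral>x'. (q (x, x'))\<^sup>2 \<partial>dom_meas \<Omega>)"

definition in_L12 :: "'a::euclidean_space set \<Rightarrow> ('a \<times> 'a \<Rightarrow> real) \<Rightarrow> bool" where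
  "in_L12 \<Omega> q \<longleftrightarrow> q \<in> borel_measurable (dom2_meas \<Omega>)
     \<and> (AE x in dom_meas \<Omega>. integrable (dom_meas \<Omega>) (\<lambda>x'. (q (x, x'))\<^sup>2))
     \<and> integrable (dom_meas \<Omega>) (row_norm \<Omega> q)"

definition L12_norm :: "'a::euclidean_space set \<Rightarrow> ('a \<times> 'a \<Rightarrow> real) \<Rightarrow> real" where
  "L12_norm \<Omega> q = (\<integral>x. row_norm \<Omega> q x \<partial>dom_meas \<Omega>)"

definition in_L12a :: "'a::euclidean_space set \<Rightarrow> ('a \<times> 'a \<Rightarrow> real) \<Rightarrow> bool" where
  "in_L12a \<Omega> q \<longleftrightarrow> in_L12 \<Omega> q \<and> (AE z in dom2_meas \<Omega>. q (fst z, snd z) = - q (snd z, fst z))"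

definition adm0 :: "'a::euclidean_space set \<Rightarrow> ('a \<Rightarrow> real) set" where
  "adm0 \<Omega> = {\<kappa>0. integrable (dom_meas \<Omega>) \<kappa>0 \<and> (AE x in dom_meas \<Omega>. \<kappa>0 x \<ge> 0)
                 \<and> (\<integral>x. \<kappa>0 x \<partial>dom_meas \<Omega>) \<le> measure lebesgue \<Omega>}"

text \<open>Inverse of kappa0 in [0,\<infinity>], with inverse 0 = \<infinity>; ennreal arithmetic has \<infinity> * 0 = 0.\<close>
definition kinv :: "('a \<Rightarrow> real) \<Rightarrow> 'a \<Rightarrow> ennreal" where
  "kinv \<kappa>0 x = inverse (ennreal (\<kappa>0 x))"

definition kdd_inv :: "('a \<Rightarrow> real) \<Rightarrow> 'a \<times> 'a \<Rightarrow> ennreal" where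
  "kdd_inv \<kappa>0 z = (kinv \<kappa>0 (fst z) + kinv \<kappa>0 (snd z)) / 2"

definition I_hat :: "'a::euclidean_space set \<Rightarrow> ('a \<times> 'a \<Rightarrow> ennreal) \<Rightarrow> ('a \<times> 'a \<Rightarrow> real) \<Rightarrow> ennreal" where
  "I_hat \<Omega> kinvdd q = (\<integral>\<^sup>+ z. (1/2) * kinvdd z * ennreal ((q z)\<^sup>2) \<partial>dom2_meas \<Omega>)"

end

theory Submission
  imports Defs
begin

lemma kinv_meas: "\<kappa>0 \<in> borel_measurable M \<Longrightarrow> kinv \<kappa>0 \<in> borel_measurable M"
  unfolding kinv_def by measurable

lemma pt: "(1/2) * (((a::ennreal) + b) / 2) * c = (1/4) * (a * c) + (1/4) * (b*c)"
proof -
  have h: "(1/2) * (x / 2) = (1/4) * (x::ennreal)" for x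
    by (simp add: divide_ennreal_def ennreal_inverse_mult[symmetric] mult.commute mult.left_commute)
  show ?thesis by (simp add: h distrib_left distrib_right mult.assoc)
qed

lemma quarter: "(1/4) * (x::ennreal) + (1/4) * x = (1/2) * x"
proof -
  have a: "(1/4::ennreal) = ennreal (1/4)" using divide_ennreal[of 1 4] by simp
  have b: "(1/2::ennreal) = ennreal (1/2)" using divide_ennreal[of 1 2] by simp
  have "(1/4::ennreal) + 1/4 = 1/2"
    unfolding a b by (simp flip: ennreal_plus)
  then show ?thesis by (metis distrib_right)
qed

lemma I_hat_eq:
  fixes \<Omega> :: "'a::euclidean_space set" and q :: "'a \<times> 'a \<Rightarrow> real"
  assumes "open \<Omega>" and "bounded \<Omega>"
    and "in_L12a \<Omega> q"
    and km: "\<kappa>0 \<in> borel_measurable (lebesgue_on \<Omega>)"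
  shows "I_hat \<Omega> (kdd_inv \<kappa>0) q = (1/2) * (\<integral>\<^sup>+ x. kinv \<kappa>0 x * ennreal ((row_norm \<Omega> q x)\<^sup>2) \<partial>lebesgue_on \<Omega>)"
proof -
  have lm: "\<Omega> \<in> lmeasurable" using assms by (simp add: lmeasurable_open)
  interpret M: finite_measure "lebesgue_on \<Omega>" using lm by (rule finite_measure_lebesgue_on)
  interpret P: pair_sigma_finite "lebesgue_on \<Omega>" "lebesgue_on \<Omega>" by unfold_locales
  note qm[measurable] = assms(3)[unfolded in_L12a_def in_L12_def, THEN conjunct1, THEN conjunct1]
  have aeint: "AE x in lebesgue_on \<Omega>. integrable (lebesgue_on \<Omega>) (\<lambda>x'. (q (x, x'))\<^sup>2)"
    using assms(3) unfolding in_L12a_def in_L12_def by blast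
  have anti: "AE z in dom2_meas \<Omega>. q (fst z, snd z) = - q (snd z, fst z)"
    using assms(3) unfolding in_L12a_def by blast
  have qs[measurable]: "(\<lambda>z. q (snd z, fst z)) \<in> borel_measurable (dom2_meas \<Omega>)"
    using measurable_compose[OF measurable_pair_swap' qm] by (simp add: split_beta')
  note kim[measurable] = kinv_meas[OF km]
  have row: "AE x in lebesgue_on \<Omega>. (\<integral>\<^sup>+ x'. ennreal ((q (x, x'))\<^sup>2) \<partial>lebesgue_on \<Omega>) = ennreal ((row_norm \<Omega> q x)\<^sup>2)"
    using aeint
  proof eventually_elim
    case (elim x)
    have "(\<integral>\<^sup>+ x'. ennreal ((q (x, x'))\<^sup>2) \<partial>lebesgue_on \<Omega>) = ennreal (\<integral>x'. (q (x, x'))\<^sup>2 \<partial>lebesgue_on \<Omega>)"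
      using elim by (intro nn_integral_eq_integral) auto
    moreover have "(\<integral>x'. (q (x, x'))\<^sup>2 \<partial>lebesgue_on \<Omega>) \<ge> 0" by (intro integral_nonneg_AE) auto
    ultimately show ?case by (simp add: row_norm_def)
  qed
  define k where "k = kinv \<kappa>0"
  have km2[measurable]: "k \<in> borel_measurable (lebesgue_on \<Omega>)" unfolding k_def by (rule kim)
  define F where "F = (\<lambda>z. k (fst z) * ennreal ((q z)\<^sup>2))"
  define G where "G = (\<lambda>z. k (snd z) * ennreal ((q z)\<^sup>2))"
  have Fm[measurable]: "F \<in> borel_measurable (dom2_meas \<Omega>)" unfolding F_def by measurable
  have Gm[measurable]: "G \<in> borel_measurable (dom2_meas \<Omega>)" unfolding G_def by measurable
  have "I_hat \<Omega> (kdd_inv \<kappa>0) q = (\<integral>\<^sup>+ z. (1/4) * F z + (1/4) * G z \<partial>dom2_meas \<Omega>)"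
    unfolding I_hat_def kdd_inv_def F_def G_def k_def by (intro nn_integral_cong) (rule pt)
  also have "\<dots> = (1/4) * integral\<^sup>N (dom2_meas \<Omega>) F + (1/4) * integral\<^sup>N (dom2_meas \<Omega>) G"
    by (simp add: nn_integral_add nn_integral_cmult)
  also have "integral\<^sup>N (dom2_meas \<Omega>) G = integral\<^sup>N (dom2_meas \<Omega>) F"
  proof -
    have "integral\<^sup>N (dom2_meas \<Omega>) G = (\<integral>\<^sup>+ z. k (snd z) * ennreal ((q (snd z, fst z))\<^sup>2) \<partial>dom2_meas \<Omega>)"
      unfolding G_def using anti by (intro nn_integral_cong_AE) auto
    also have "\<dots> = (\<integral>\<^sup>+ y. \<integral>\<^sup>+ x. k y * ennreal ((q (y, x))\<^sup>2) \<partial>lebesgue_on \<Omega> \<partial>lebesgue_on \<Omega>)"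
    proof -
      define h where "h = (\<lambda>z. q (snd z, fst z))"
      have hm[measurable]: "h \<in> borel_measurable (dom2_meas \<Omega>)" unfolding h_def by (rule qs)
      have "(\<lambda>z. k (snd z) * ennreal ((h z)\<^sup>2)) \<in> borel_measurable (dom2_meas \<Omega>)" by measurable
      from P.nn_integral_snd[OF this] show ?thesis by (simp add: h_def)
    qed
    also have "\<dots> = integral\<^sup>N (dom2_meas \<Omega>) F"
      using M.nn_integral_fst[OF Fm] by (simp add: F_def)
    finally show ?thesis .
  qed
  also have "integral\<^sup>N (dom2_meas \<Omega>) F = (\<integral>\<^sup>+ x. k x * ennreal ((row_norm \<Omega> q x)\<^sup>2) \<partial>lebesgue_on \<Omega>)"
  proof -
    have "integral\<^sup>N (dom2_meas \<Omega>) F = (\<integral>\<^sup>+ x. \<integral>\<^sup>+ y. k x * ennreal ((q (x, y))\<^sup>2) \<partial>lebesgue_on \<Omega> \<partial>lebesgue_on \<Omega>)"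
      using M.nn_integral_fst[OF Fm] by (simp add: F_def)
    also have "\<dots> = (\<integral>\<^sup>+ x. k x * \<integral>\<^sup>+ y. ennreal ((q (x, y))\<^sup>2) \<partial>lebesgue_on \<Omega> \<partial>lebesgue_on \<Omega>)"
      by (intro nn_integral_cong nn_integral_cmult) measurable
    also have "\<dots> = (\<integral>\<^sup>+ x. k x * ennreal ((row_norm \<Omega> q x)\<^sup>2) \<partial>lebesgue_on \<Omega>)"
      using row by (intro nn_integral_cong_AE) auto
    finally show ?thesis .
  qed
  finally show ?thesis unfolding quarter k_def .
qed

lemma ennreal_half_bound:
  assumes "ennreal (2*a) \<le> J + ennreal a" "a \<ge> 0"
  shows "ennreal a \<le> J"
proof (cases J)
  case (real j)
  then have "ennreal (2*a) \<le> ennreal (j + a)" using assms by (simp flip: ennreal_plus)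
  then have "2*a \<le> j + a" using real assms ennreal_le_iff[of "j+a" "2*a"] by simp
  then show ?thesis using real by (simp add: ennreal_leI)
qed simp

lemma amgm: "(r::real) > 0 \<Longrightarrow> k > 0 \<Longrightarrow> c > 0 \<Longrightarrow> 2 * r / c \<le> r\<^sup>2 / k + k / c\<^sup>2"
proof -
  assume h: "r > 0" "k > 0" "c > 0"
  have e: "r\<^sup>2 / k + k / c\<^sup>2 - 2 * r / c = (r*c - k)\<^sup>2 / (k * c\<^sup>2)"
    using h by (simp add: field_simps power2_eq_square)
  have "(r*c - k)\<^sup>2 / (k * c\<^sup>2) \<ge> 0" using h by simp
  then show ?thesis using e by linarith
qed

lemma null_int:
  assumes "\<Omega> \<in> lmeasurable" "measure lebesgue \<Omega> = 0"
  shows "(\<integral>x. f x \<partial>lebesgue_on \<Omega>) = (0::real)"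
  by (meson assms(1,2) integral_eq_zero_null_sets negligible_iff_measure0
    negligible_iff_null_sets)


theorem proposition2p10:
  fixes \<Omega> :: "'a::euclidean_space set" and q :: "'a \<times> 'a \<Rightarrow> real"
  assumes "open \<Omega>" and "bounded \<Omega>"
    and "in_L12a \<Omega> q"
    and "\<not> (AE z in dom2_meas \<Omega>. q z = 0)"
  defines "c \<equiv> measure lebesgue \<Omega> / L12_norm \<Omega> q"
  defines "\<kappa>hat \<equiv> (\<lambda>x. c * row_norm \<Omega> q x)"
  shows "\<kappa>hat \<in> adm0 \<Omega> \<and>
         (\<forall>\<kappa>0 \<in> adm0 \<Omega>. I_hat \<Omega> (kdd_inv \<kappa>hat) q \<le> I_hat \<Omega> (kdd_inv \<kappa>0) q)"
proof -
  have lm: "\<Omega> \<in> lmeasurable" using assms by (simp add: lmeasurable_open)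
  interpret M: finite_measure "lebesgue_on \<Omega>" using lm by (rule finite_measure_lebesgue_on)
  interpret P: pair_sigma_finite "lebesgue_on \<Omega>" "lebesgue_on \<Omega>" by unfold_locales
  note qm[measurable] = assms(3)[unfolded in_L12a_def in_L12_def, THEN conjunct1, THEN conjunct1]
  have aeint: "AE x in lebesgue_on \<Omega>. integrable (lebesgue_on \<Omega>) (\<lambda>x'. (q (x, x'))\<^sup>2)"
    using assms(3) unfolding in_L12a_def in_L12_def by blast
  have rint: "integrable (lebesgue_on \<Omega>) (row_norm \<Omega> q)"
    using assms(3) unfolding in_L12a_def in_L12_def by blast
  define r where "r = row_norm \<Omega> q"
  define L where "L = L12_norm \<Omega> q"
  define m where "m = measure lebesgue \<Omega>"
  have rint': "integrable (lebesgue_on \<Omega>) r" using rint r_def by simp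
  have rm[measurable]: "r \<in> borel_measurable (lebesgue_on \<Omega>)" using rint' by auto
  have r0: "r x \<ge> 0" for x
  proof -
    have "(\<integral>x'. (q (x, x'))\<^sup>2 \<partial>lebesgue_on \<Omega>) \<ge> 0" by (intro integral_nonneg_AE) auto
    then show ?thesis by (simp add: r_def row_norm_def)
  qed
  have Lr: "L = (\<integral>x. r x \<partial>lebesgue_on \<Omega>)" by (simp add: L_def L12_norm_def r_def)
  have L0: "L \<ge> 0" unfolding Lr using r0 by (intro integral_nonneg_AE) auto
  have m0: "m \<ge> 0" by (simp add: m_def)
  have Lpos: "L > 0"
  proof (rule ccontr)
    assume "\<not> L > 0"
    then have "L = 0" using L0 by simp
    then have "AE x in lebesgue_on \<Omega>. r x = 0"
      using integral_nonneg_eq_0_iff_AE[OF rint'] r0 Lr by auto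
    then have "AE x in lebesgue_on \<Omega>. AE y in lebesgue_on \<Omega>. q (x, y) = 0"
      using aeint
    proof eventually_elim
      case (elim x)
      have i0: "(\<integral>x'. (q (x, x'))\<^sup>2 \<partial>lebesgue_on \<Omega>) \<ge> 0" by (intro integral_nonneg_AE) auto
      then have "(\<integral>x'. (q (x, x'))\<^sup>2 \<partial>lebesgue_on \<Omega>) = 0" using elim(1) by (simp add: r_def row_norm_def)
      then have "AE y in lebesgue_on \<Omega>. (q (x, y))\<^sup>2 = 0"
        using integral_nonneg_eq_0_iff_AE[OF elim(2)] by auto
      then show ?case by auto
    qed
    moreover have "q -` {0} \<inter> space (dom2_meas \<Omega>) \<in> sets (dom2_meas \<Omega>)"
      by (rule measurable_sets[OF qm]) simp
    then have "{z \<in> space (dom2_meas \<Omega>). q z = 0} \<in> sets (dom2_meas \<Omega>)"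
      by (simp add: vimage_def Int_def conj_commute)
    ultimately have "AE z in dom2_meas \<Omega>. q z = 0"
      by (intro P.AE_pair_measure) auto
    then show False using assms(4) by simp
  qed
  have mpos: "m > 0"
  proof (rule ccontr)
    assume "\<not> m > 0"
    then have "m = 0" using m0 by simp
    then have "L = 0" unfolding Lr m_def using null_int[OF lm] by blast
    then show False using Lpos by simp
  qed
  have cdef: "c = m / L" by (simp add: c_def m_def L_def)
  have cpos: "c > 0" using cdef Lpos mpos by simp
  have khat: "\<kappa>hat = (\<lambda>x. c * r x)" by (simp add: \<kappa>hat_def r_def)
  have khint: "integrable (lebesgue_on \<Omega>) \<kappa>hat" unfolding khat using rint' by simp
  have adm: "\<kappa>hat \<in> adm0 \<Omega>"
  proof -
    have "(\<integral>x. \<kappa>hat x \<partial>lebesgue_on \<Omega>) = c * L" unfolding khat Lr by simp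
    also have "\<dots> = m" using cdef Lpos by simp
    finally show ?thesis unfolding adm0_def using khint cpos r0 by (auto simp: khat m_def)
  qed
  define a where "a = L * L / m"
  have a0: "a \<ge> 0" using L0 mpos by (simp add: a_def)
  define J where "J = (\<lambda>\<kappa>0. \<integral>\<^sup>+ x. kinv \<kappa>0 x * ennreal ((r x)\<^sup>2) \<partial>lebesgue_on \<Omega>)"
  have Jhat: "J \<kappa>hat = ennreal a"
  proof -
    have "J \<kappa>hat = (\<integral>\<^sup>+ x. ennreal (r x / c) \<partial>lebesgue_on \<Omega>)"
      unfolding J_def
    proof (intro nn_integral_cong)
      fix x
      show "kinv \<kappa>hat x * ennreal ((r x)\<^sup>2) = ennreal (r x / c)"
      proof (cases "r x = 0")
        case True then show ?thesis by simp
      next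
        case False
        then have rp: "r x > 0" using r0[of x] by simp
        have "kinv \<kappa>hat x = ennreal (inverse (c * r x))"
          unfolding kinv_def khat using rp cpos by (simp add: inverse_ennreal)
        then have "kinv \<kappa>hat x * ennreal ((r x)\<^sup>2) = ennreal (inverse (c * r x) * (r x)\<^sup>2)"
          using rp cpos by (simp add: ennreal_mult)
        also have "inverse (c * r x) * (r x)\<^sup>2 = r x / c" using rp cpos by (simp add: field_simps power2_eq_square)
        finally show ?thesis .
      qed
    qed
    also have "\<dots> = ennreal (\<integral>x. r x / c \<partial>lebesgue_on \<Omega>)"
      using rint' r0 cpos by (intro nn_integral_eq_integral) auto
    also have "(\<integral>x. r x / c \<partial>lebesgue_on \<Omega>) = a"
      unfolding a_def using cdef Lpos mpos Lr by simp
    finally show ?thesis .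
  qed
  have Jlow: "ennreal a \<le> J \<kappa>0" if k0: "\<kappa>0 \<in> adm0 \<Omega>" for \<kappa>0
  proof -
    have k0i: "integrable (lebesgue_on \<Omega>) \<kappa>0" and k0p: "AE x in lebesgue_on \<Omega>. \<kappa>0 x \<ge> 0"
      and k0s: "(\<integral>x. \<kappa>0 x \<partial>lebesgue_on \<Omega>) \<le> m"
      using k0 unfolding adm0_def m_def by auto
    have k0m[measurable]: "\<kappa>0 \<in> borel_measurable (lebesgue_on \<Omega>)" using k0i by auto
    have kim[measurable]: "kinv \<kappa>0 \<in> borel_measurable (lebesgue_on \<Omega>)" using kinv_meas[OF k0m] .
    have pw: "ennreal (2 * r x / c) \<le> kinv \<kappa>0 x * ennreal ((r x)\<^sup>2) + ennreal (\<kappa>0 x / c\<^sup>2)" for x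
    proof (cases "r x = 0")
      case True then show ?thesis by simp
    next
      case False
      then have rp: "r x > 0" using r0[of x] by simp
      show ?thesis
      proof (cases "\<kappa>0 x > 0")
        case True
        have "kinv \<kappa>0 x = ennreal (1 / \<kappa>0 x)" unfolding kinv_def using True
          by (simp add: inverse_ennreal inverse_eq_divide)
        then have "kinv \<kappa>0 x * ennreal ((r x)\<^sup>2) + ennreal (\<kappa>0 x / c\<^sup>2)
            = ennreal ((r x)\<^sup>2 / \<kappa>0 x + \<kappa>0 x / c\<^sup>2)"
          using True cpos by (simp add: ennreal_mult[symmetric] ennreal_plus)
        moreover have "2 * r x / c \<le> (r x)\<^sup>2 / \<kappa>0 x + \<kappa>0 x / c\<^sup>2" using amgm rp True cpos by blast
        ultimately show ?thesis by (simp add: ennreal_leI)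
      next
        case False
        then have "kinv \<kappa>0 x = top" unfolding kinv_def by (simp add: ennreal_eq_0_iff)
        then have "kinv \<kappa>0 x * ennreal ((r x)\<^sup>2) = top" using rp by (simp add: ennreal_mult_eq_top_iff)
        then show ?thesis by simp
      qed
    qed
    have "ennreal (2 * a) = ennreal (\<integral>x. 2 * r x / c \<partial>lebesgue_on \<Omega>)"
    proof -
      have "(\<integral>x. 2 * r x / c \<partial>lebesgue_on \<Omega>) = 2 * L / c" unfolding Lr by simp
      also have "\<dots> = 2 * a" using cdef Lpos mpos by (simp add: a_def)
      finally show ?thesis by simp
    qed
    also have "\<dots> = (\<integral>\<^sup>+ x. ennreal (2 * r x / c) \<partial>lebesgue_on \<Omega>)"
      using rint' r0 cpos by (intro nn_integral_eq_integral[symmetric]) auto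
    also have "\<dots> \<le> (\<integral>\<^sup>+ x. kinv \<kappa>0 x * ennreal ((r x)\<^sup>2) + ennreal (\<kappa>0 x / c\<^sup>2) \<partial>lebesgue_on \<Omega>)"
      using pw by (intro nn_integral_mono) auto
    also have "\<dots> = J \<kappa>0 + (\<integral>\<^sup>+ x. ennreal (\<kappa>0 x / c\<^sup>2) \<partial>lebesgue_on \<Omega>)"
      unfolding J_def by (intro nn_integral_add) measurable
    also have "(\<integral>\<^sup>+ x. ennreal (\<kappa>0 x / c\<^sup>2) \<partial>lebesgue_on \<Omega>) = ennreal (\<integral>x. \<kappa>0 x / c\<^sup>2 \<partial>lebesgue_on \<Omega>)"
      using k0i k0p by (intro nn_integral_eq_integral) auto
    also have "(\<integral>x. \<kappa>0 x / c\<^sup>2 \<partial>lebesgue_on \<Omega>) \<le> a"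
    proof -
      have "(\<integral>x. \<kappa>0 x / c\<^sup>2 \<partial>lebesgue_on \<Omega>) = (\<integral>x. \<kappa>0 x \<partial>lebesgue_on \<Omega>) / c\<^sup>2" by simp
      also have "\<dots> \<le> m / c\<^sup>2" using k0s cpos by (simp add: divide_right_mono)
      also have "\<dots> = a" unfolding cdef a_def using Lpos mpos by (simp add: field_simps power2_eq_square)
      finally show ?thesis .
    qed
    finally have "ennreal (2 * a) \<le> J \<kappa>0 + ennreal a"
      by (meson add_left_mono ennreal_leI order_trans)
    then show ?thesis using ennreal_half_bound a0 by blast
  qed
  have khm: "\<kappa>hat \<in> borel_measurable (lebesgue_on \<Omega>)" using khint by auto
  show ?thesis
  proof (intro conjI ballI adm)
    fix \<kappa>0 assume k0: "\<kappa>0 \<in> adm0 \<Omega>"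
    have k0m: "\<kappa>0 \<in> borel_measurable (lebesgue_on \<Omega>)" using k0 unfolding adm0_def by auto
    have "I_hat \<Omega> (kdd_inv \<kappa>hat) q = (1/2) * J \<kappa>hat"
      unfolding J_def r_def by (rule I_hat_eq[OF assms(1-3) khm])
    also have "\<dots> \<le> (1/2) * J \<kappa>0" using Jhat Jlow[OF k0] by (simp add: mult_left_mono)
    also have "\<dots> = I_hat \<Omega> (kdd_inv \<kappa>0) q"
      unfolding J_def r_def by (rule I_hat_eq[OF assms(1-3) k0m, symmetric])
    finally show "I_hat \<Omega> (kdd_inv \<kappa>hat) q \<le> I_hat \<Omega> (kdd_inv \<kappa>0) q" .
  qed
qed

end
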